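(* Let $\pi$ be the policy induced by Dual Gradient Descent with Proxy Assignments. Then $$\mathbb E\big[V^\pi[\omega]\big]\le\mathbb E\big[\widetilde V^{\textsc{off}}_1[\omega_1]\big]+\sum_{k\in[K]}\mathbb E\big[\widetilde{\textsc{Reg}}_k[\omega_k]\big]+O\big(K^{5/2}\sqrt T\big).$$
   Context: Model. There are $m$ resources and $n$ arrival types; type $j$ has cost vector $c_j\in\mathbb R^m$ and allowed resources $\mathcal S_j\subseteq[m]$, $\max_{i,j}|c_{ji}|<\infty$. The horizon has $T$ periods partitioned into $K=\Theta(1)$ epochs ($T$ a multiple of $K$), epoch $k$ being $\mathcal T_k=\{(k-1)T/K+1,\dots,kT/K\}$. In period $t$ one arrival of type $j^t$ occurs, $j^1,\dots,j^T$ i.i.d. with $\mathbb P(j^t=j)=p_j$, $p$ not depending on $T$ and unknown to the decision-maker; $\omega=(j^t)_{t\le T}$, $\omega_k=(j^t)_{t\in\mathcal T_k}$, $\Lambda_j(t_1:t_2)=\sum_{t_1<\tau\le t_2}\mathbf 1\{j^\tau=j\}$. Feasible decisions: $\mathcal X^t=\{x\in\{0,1\}^m:\sum_ix_i\le1,\ x_i=0\ \forall i\notin\mathcal S_{j^t}\}$. $Z^\pi_{ji}(t)$ counts type-$j$ arrivals assigned to $i$ in periods $1..t$, $Z^\pi_i=\sum_jZ^\pi_{ji}$. Each epoch $k$ and resource $i$ has a target $\rho_{ki}\in[0,1]$ and convex $L$-Lipschitz $g_{ki}:[0,1]\to\mathbb R_{\ge0}$ with $g_{ki}(\rho_{ki})=0$.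 Cost: $V^\pi[\omega]=\sum_{j,i}c_{ji}Z^\pi_{ji}(T)+\frac TK\sum_k\sum_ik\,g_{ki}\big(Z^\pi_i(kT/K)/(kT/K)\big)$. Expectations are over arrivals and algorithm decisions; $O(\cdot)$ is as $T\to\infty$ with the hidden constant depending only on $m,n,c,L,p$. Dual Gradient Descent with Proxy Assignments (stepsize $\eta$, initial $\mu^1\in\mathbb R^{K\times m}$): for $t=1,\dots,T$, with $k$ the epoch of $t$: if $t=(k-1)T/K+1$ set $\mu^t_{k'}=\mu^1_{k'}$ for $k'\ge k$; observe $j=j^t$; for every $k'\ge k$ compute $\tilde x^t_{k'}\in\arg\min_{x\in\mathcal X^t}\sum_ix_i(c_{ji}-\mu^t_{k'i})$; implement $x^t=\tilde x^t_k$; compute $a^t\in\arg\min_{a\in[0,1]^{(K+1-k)\times m}}\sum_{k'\ge k}k'\sum_ig_{k'i}\big(\frac{\sum_{t'\le(k-1)T/K}x^{t'}_i}{k'T/K}+\sum_{k''=k}^{k'}\frac{a_{k''i}}{k'}\big)+\sum_{k'\ge k}\sum_i\mu^t_{k'i}a_{k'i}$; update $\mu^{t+1}_{k'}=\mu^t_{k'}+\eta(a^t_{k'}-\tilde x^t_{k'})$ for $k'\ge k$. Proxy quantities. For $k\le k_1\le k_2\le K$: $\widetilde Z^\pi_{ji,k}\big(\frac{(k_1-1)T}K:\frac{k_2T}K\big)=\sum_{t\in\mathcal T_k}\sum_{k''=k_1}^{k_2}\tilde x^t_{k''i}\mathbf 1\{j^t=j\}$, $\widetilde Z^\pi_{i,k}=\sum_j\widetilde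 Z^\pi_{ji,k}$. Cumulative proxy cost: $\widetilde V^\pi_k[\omega_k\mid z]=\sum_{j,i}c_{ji}\widetilde Z^\pi_{ji,k}\big(\frac{(k-1)T}K:T\big)+\frac TK\sum_{k'\ge k}\sum_ik'g_{k'i}\Big(\frac{z_i+\widetilde Z^\pi_{i,k}((k-1)T/K:k'T/K)}{k'T/K}\Big)$. Proxy offline optimum $\widetilde V^{\textsc{off}}_k[\omega_k\mid z]$: the minimum over nonnegative integers $Z^{(k')}_{ji}$ ($k'\ge k$), zero for $i\notin\mathcal S_j$, with $\sum_iZ^{(k')}_{ji}\le\Lambda_j\big(\frac{(k-1)T}K:\frac{kT}K\big)$ for all $j,k'\ge k$, of $\sum_{j,i}c_{ji}\sum_{k'\ge k}Z^{(k')}_{ji}+\frac TK\sum_{k'\ge k}\sum_ik'g_{k'i}\Big(\frac{z_i+\sum_j\sum_{k''=k}^{k'}Z^{(k'')}_{ji}}{k'T/K}\Big)$. For $k=1$, $z=0$ is suppressed: $\widetilde V^{\textsc{off}}_1[\omega_1]$, $\widetilde V^\pi_1[\omega_1]$. Proxy regret: $\widetilde{\textsc{Reg}}_k[\omega_k]=\widetilde V^\pi_k[\omega_k\mid Z^\pi((k-1)T/K)]-\widetilde V^{\textsc{off}}_k[\omega_k\mid Z^\pi((k-1)T/K)]$. *)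

theory Defs
  imports "HOL-Analysis.Analysis"
begin

text \<open>Resources are i < m, arrival types are j < n (0-based);
periods t are 1..T and epochs k are 1..K (1-based). An arrival sequence
omega is a function nat => nat, meaningful on 1..T.
Tie-breaking rules of the argmin steps are arbitrary causal deterministic
selectors: they may depend on the period t, the arrival history up to t,
and the epoch index k'; they are required to return argmins along the
actual trajectory.\<close>

type_synonym xsel = "nat \<Rightarrow> (nat \<Rightarrow> nat) \<Rightarrow> nat \<Rightarrow> nat \<Rightarrow> nat"
type_synonym asel = "nat \<Rightarrow> (nat \<Rightarrow> nat) \<Rightarrow> nat \<Rightarrow> nat \<Rightarrow> real"

definition hist :: "(nat \<Rightarrow> nat) \<Rightarrow> nat \<Rightarrow> nat \<Rightarrow> nat" where
  "hist \<omega> t = (\<lambda>s. if s \<le> t then \<omega> s else 0)"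

definition ep :: "nat \<Rightarrow> nat \<Rightarrow> nat \<Rightarrow> nat" where
  "ep T K t = (t - 1) div (T div K) + 1"

definition is_start :: "nat \<Rightarrow> nat \<Rightarrow> nat \<Rightarrow> bool" where
  "is_start T K t \<longleftrightarrow> (t - 1) mod (T div K) = 0"

definition epoch :: "nat \<Rightarrow> nat \<Rightarrow> nat \<Rightarrow> nat set" where
  "epoch T K k = {(k - 1) * (T div K) + 1 .. k * (T div K)}"

definition Xset :: "nat \<Rightarrow> (nat \<Rightarrow> nat set) \<Rightarrow> nat \<Rightarrow> (nat \<Rightarrow> nat) set" where
  "Xset m S j = {x. (\<forall>i. x i \<le> 1) \<and> (\<forall>i. (m \<le> i \<or> i \<notin> S j) \<longrightarrow> x i = 0)
                   \<and> (\<Sum>i<m. x i) \<le> 1}"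

text \<open>dual variables mu^t (after the epoch reset) of DGD with proxy assignments\<close>
primrec dgd_mu :: "nat \<Rightarrow> nat \<Rightarrow> real \<Rightarrow> (nat \<Rightarrow> nat \<Rightarrow> real) \<Rightarrow> xsel \<Rightarrow> asel
    \<Rightarrow> (nat \<Rightarrow> nat) \<Rightarrow> nat \<Rightarrow> nat \<Rightarrow> nat \<Rightarrow> real" where
  "dgd_mu K T \<eta> \<mu>1 selX selA \<omega> 0 = \<mu>1"
| "dgd_mu K T \<eta> \<mu>1 selX selA \<omega> (Suc t) =
     (let prev = (if t = 0 then \<mu>1 else
          (\<lambda>k' i. if ep T K t \<le> k'
                  then dgd_mu K T \<eta> \<mu>1 selX selA \<omega> t k' i
                       + \<eta> * (selA t (hist \<omega> t) k' i - real (selX t (hist \<omega> t) k' i))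
                  else dgd_mu K T \<eta> \<mu>1 selX selA \<omega> t k' i))
      in (\<lambda>k' i. if is_start T K (Suc t) \<and> ep T K (Suc t) \<le> k' then \<mu>1 k' i else prev k' i))"

definition xI :: "nat \<Rightarrow> nat \<Rightarrow> xsel \<Rightarrow> (nat \<Rightarrow> nat) \<Rightarrow> nat \<Rightarrow> nat \<Rightarrow> nat" where
  "xI K T selX \<omega> t i = selX t (hist \<omega> t) (ep T K t) i"

definition Zji :: "nat \<Rightarrow> nat \<Rightarrow> xsel \<Rightarrow> (nat \<Rightarrow> nat) \<Rightarrow> nat \<Rightarrow> nat \<Rightarrow> nat \<Rightarrow> nat" where
  "Zji K T selX \<omega> j i t = (\<Sum>s\<in>{1..t}. if \<omega> s = j then xI K T selX \<omega> s i else 0)"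

definition Zi :: "nat \<Rightarrow> nat \<Rightarrow> nat \<Rightarrow> xsel \<Rightarrow> (nat \<Rightarrow> nat) \<Rightarrow> nat \<Rightarrow> nat \<Rightarrow> nat" where
  "Zi n K T selX \<omega> i t = (\<Sum>j<n. Zji K T selX \<omega> j i t)"

definition abox :: "nat \<Rightarrow> nat \<Rightarrow> nat \<Rightarrow> (nat \<Rightarrow> nat \<Rightarrow> real) \<Rightarrow> bool" where
  "abox m K k a \<longleftrightarrow> (\<forall>k'\<in>{k..K}. \<forall>i<m. 0 \<le> a k' i \<and> a k' i \<le> 1)"

text \<open>objective of the a^t step; xprev i = sum of implemented x_i over periods 1..(k-1)T/K\<close>
definition aobj :: "nat \<Rightarrow> nat \<Rightarrow> nat \<Rightarrow> (nat \<Rightarrow> nat \<Rightarrow> real \<Rightarrow> real) \<Rightarrow> (nat \<Rightarrow> real)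
    \<Rightarrow> (nat \<Rightarrow> nat \<Rightarrow> real) \<Rightarrow> nat \<Rightarrow> (nat \<Rightarrow> nat \<Rightarrow> real) \<Rightarrow> real" where
  "aobj m K T g xprev \<mu> k a =
     (\<Sum>k'=k..K. real k' * (\<Sum>i<m. g k' i (xprev i / (real k' * real T / real K)
                                           + (\<Sum>k''=k..k'. a k'' i) / real k')))
     + (\<Sum>k'=k..K. \<Sum>i<m. \<mu> k' i * a k' i)"

text \<open>the selectors realise the argmin steps of the algorithm along the trajectory for omega\<close>
definition dgd_valid ::
  "nat \<Rightarrow> (nat \<Rightarrow> nat \<Rightarrow> real) \<Rightarrow> (nat \<Rightarrow> nat set) \<Rightarrow> (nat \<Rightarrow> nat \<Rightarrow> real \<Rightarrow> real)
   \<Rightarrow> nat \<Rightarrow> nat \<Rightarrow> real \<Rightarrow> (nat \<Rightarrow> nat \<Rightarrow> real) \<Rightarrow> xsel \<Rightarrow> asel \<Rightarrow> (nat \<Rightarrow> nat) \<Rightarrow> bool" where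
  "dgd_valid m c S g K T \<eta> \<mu>1 selX selA \<omega> \<longleftrightarrow>
    (\<forall>t\<in>{1..T}.
      let k = ep T K t; \<mu> = dgd_mu K T \<eta> \<mu>1 selX selA \<omega> t; j = \<omega> t;
          xprev = (\<lambda>i. \<Sum>t'\<in>{1..(k - 1) * (T div K)}. real (xI K T selX \<omega> t' i));
          a = selA t (hist \<omega> t)
      in (\<forall>k'\<in>{k..K}.
            selX t (hist \<omega> t) k' \<in> Xset m S j \<and>
            (\<forall>y\<in>Xset m S j.
               (\<Sum>i<m. real (selX t (hist \<omega> t) k' i) * (c j i - \<mu> k' i))
                 \<le> (\<Sum>i<m. real (y i) * (c j i - \<mu> k' i))))
         \<and> abox m K k a
         \<and> (\<forall>b. abox m K k b \<longrightarrow> aobj m K T g xprev \<mu> k a \<le> aobj m K T g xprev \<mu> k b))"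

definition Vpi :: "nat \<Rightarrow> nat \<Rightarrow> (nat \<Rightarrow> nat \<Rightarrow> real) \<Rightarrow> (nat \<Rightarrow> nat \<Rightarrow> real \<Rightarrow> real)
    \<Rightarrow> nat \<Rightarrow> nat \<Rightarrow> xsel \<Rightarrow> (nat \<Rightarrow> nat) \<Rightarrow> real" where
  "Vpi m n c g K T selX \<omega> =
     (\<Sum>j<n. \<Sum>i<m. c j i * real (Zji K T selX \<omega> j i T))
     + real T / real K * (\<Sum>k=1..K. \<Sum>i<m. real k *
          g k i (real (Zi n K T selX \<omega> i (k * (T div K))) / (real k * real T / real K)))"

text \<open>proxy counts tilde Z_{ji,k}((k1-1)T/K : k2 T/K)\<close>
definition Zt :: "nat \<Rightarrow> nat \<Rightarrow> xsel \<Rightarrow> (nat \<Rightarrow> nat) \<Rightarrow> nat \<Rightarrow> nat \<Rightarrow> nat \<Rightarrow> nat \<Rightarrow> nat \<Rightarrow> nat" where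
  "Zt K T selX \<omega> k k1 k2 j i =
     (\<Sum>t\<in>epoch T K k. \<Sum>k''=k1..k2. if \<omega> t = j then selX t (hist \<omega> t) k'' i else 0)"

definition Vprox :: "nat \<Rightarrow> nat \<Rightarrow> (nat \<Rightarrow> nat \<Rightarrow> real) \<Rightarrow> (nat \<Rightarrow> nat \<Rightarrow> real \<Rightarrow> real)
    \<Rightarrow> nat \<Rightarrow> nat \<Rightarrow> xsel \<Rightarrow> (nat \<Rightarrow> nat) \<Rightarrow> nat \<Rightarrow> (nat \<Rightarrow> real) \<Rightarrow> real" where
  "Vprox m n c g K T selX \<omega> k z =
     (\<Sum>j<n. \<Sum>i<m. c j i * real (Zt K T selX \<omega> k k K j i))
     + real T / real K * (\<Sum>k'=k..K. \<Sum>i<m. real k' *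
          g k' i ((z i + real (\<Sum>j<n. Zt K T selX \<omega> k k k' j i)) / (real k' * real T / real K)))"

definition Lam :: "nat \<Rightarrow> nat \<Rightarrow> (nat \<Rightarrow> nat) \<Rightarrow> nat \<Rightarrow> nat \<Rightarrow> nat" where
  "Lam T K \<omega> k j = card {t\<in>epoch T K k. \<omega> t = j}"

text \<open>feasible integer plans Z^{(k')}_{ji}, k' in k..K, for the proxy offline problem\<close>
definition offfeas :: "nat \<Rightarrow> nat \<Rightarrow> (nat \<Rightarrow> nat set) \<Rightarrow> nat \<Rightarrow> nat \<Rightarrow> (nat \<Rightarrow> nat)
    \<Rightarrow> (nat \<Rightarrow> nat \<Rightarrow> nat \<Rightarrow> nat) set" where
  "offfeas m n S K k lam =
     {Z. (\<forall>k' j i. Z k' j i \<noteq> 0 \<longrightarrow> k \<le> k' \<and> k' \<le> K \<and> j < n \<and> i < m \<and> i \<in> S j)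
         \<and> (\<forall>k'\<in>{k..K}. \<forall>j<n. (\<Sum>i<m. Z k' j i) \<le> lam j)}"

definition offobj :: "nat \<Rightarrow> nat \<Rightarrow> (nat \<Rightarrow> nat \<Rightarrow> real) \<Rightarrow> (nat \<Rightarrow> nat \<Rightarrow> real \<Rightarrow> real)
    \<Rightarrow> nat \<Rightarrow> nat \<Rightarrow> nat \<Rightarrow> (nat \<Rightarrow> real) \<Rightarrow> (nat \<Rightarrow> nat \<Rightarrow> nat \<Rightarrow> nat) \<Rightarrow> real" where
  "offobj m n c g K T k z Z =
     (\<Sum>j<n. \<Sum>i<m. c j i * real (\<Sum>k'=k..K. Z k' j i))
     + real T / real K * (\<Sum>k'=k..K. \<Sum>i<m. real k' *
          g k' i ((z i + real (\<Sum>j<n. \<Sum>k''=k..k'. Z k'' j i)) / (real k' * real T / real K)))"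

definition Voff :: "nat \<Rightarrow> nat \<Rightarrow> (nat \<Rightarrow> nat \<Rightarrow> real) \<Rightarrow> (nat \<Rightarrow> nat set)
    \<Rightarrow> (nat \<Rightarrow> nat \<Rightarrow> real \<Rightarrow> real) \<Rightarrow> nat \<Rightarrow> nat \<Rightarrow> (nat \<Rightarrow> nat) \<Rightarrow> nat \<Rightarrow> (nat \<Rightarrow> real) \<Rightarrow> real" where
  "Voff m n c S g K T \<omega> k z =
     Min (offobj m n c g K T k z ` offfeas m n S K k (Lam T K \<omega> k))"

definition Regt :: "nat \<Rightarrow> nat \<Rightarrow> (nat \<Rightarrow> nat \<Rightarrow> real) \<Rightarrow> (nat \<Rightarrow> nat set)
    \<Rightarrow> (nat \<Rightarrow> nat \<Rightarrow> real \<Rightarrow> real) \<Rightarrow> nat \<Rightarrow> nat \<Rightarrow> xsel \<Rightarrow> (nat \<Rightarrow> nat) \<Rightarrow> nat \<Rightarrow> real" where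
  "Regt m n c S g K T selX \<omega> k =
     (let z = (\<lambda>i. real (Zi n K T selX \<omega> i ((k - 1) * (T div K))))
      in Vprox m n c g K T selX \<omega> k z - Voff m n c S g K T \<omega> k z)"

definition Ex :: "nat \<Rightarrow> nat \<Rightarrow> (nat \<Rightarrow> real) \<Rightarrow> ((nat \<Rightarrow> nat) \<Rightarrow> real) \<Rightarrow> real" where
  "Ex n T p f = (\<Sum>\<omega>\<in>PiE {1..T} (\<lambda>_. {..<n}). (\<Prod>t\<in>{1..T}. p (\<omega> t)) * f \<omega>)"

end

theory Submission
  imports Defs
begin


lemma Ex_add: "Ex n T p (\<lambda>\<omega>. f \<omega> + g \<omega>) = Ex n T p f + Ex n T p g"
  unfolding Ex_def by (simp add: distrib_left sum.distrib)

lemma Ex_diff: "Ex n T p (\<lambda>\<omega>. f \<omega> - g \<omega>) = Ex n T p f - Ex n T p g"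
  unfolding Ex_def by (simp add: right_diff_distrib sum_subtractf)

lemma Ex_cmult: "Ex n T p (\<lambda>\<omega>. c * f \<omega>) = c * Ex n T p f"
  unfolding Ex_def by (simp add: sum_distrib_left mult.left_commute)

lemma Ex_sum: "finite I \<Longrightarrow> Ex n T p (\<lambda>\<omega>. \<Sum>i\<in>I. f i \<omega>) = (\<Sum>i\<in>I. Ex n T p (f i))"
  by (induction I rule: finite_induct) (auto simp: Ex_add, simp add: Ex_def)

lemma Ex_mono:
  assumes "\<forall>j<n. 0 \<le> p j" "\<And>\<omega>. \<omega> \<in> PiE {1..T} (\<lambda>_. {..<n}) \<Longrightarrow> f \<omega> \<le> g \<omega>"
  shows "Ex n T p f \<le> Ex n T p g"
  unfolding Ex_def
proof (rule sum_mono)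
  fix \<omega> assume w: "\<omega> \<in> PiE {1..T} (\<lambda>_. {..<n})"
  have "0 \<le> (\<Prod>t\<in>{1..T}. p (\<omega> t))"
    using w assms(1) by (intro prod_nonneg) (auto simp: PiE_iff)
  then show "(\<Prod>t\<in>{1..T}. p (\<omega> t)) * f \<omega> \<le> (\<Prod>t\<in>{1..T}. p (\<omega> t)) * g \<omega>"
    using assms(2)[OF w] by (rule mult_left_mono[rotated])
qed

lemma Ex_prod: "Ex n T p (\<lambda>\<omega>. \<Prod>t\<in>{1..T}. h t (\<omega> t)) = (\<Prod>t\<in>{1..T}. \<Sum>v<n. p v * h t v)"
  unfolding Ex_def using prod_sum_PiE[of "{1..T}" "\<lambda>_. {..<n}" "\<lambda>t v. p v * h t v"]
  by (simp add: prod.distrib)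

lemma Ex_const:
  assumes "(\<Sum>j<n. p j) = 1"
  shows "Ex n T p (\<lambda>\<omega>. a) = a"
proof -
  have "Ex n T p (\<lambda>\<omega>. \<Prod>t\<in>{1..T}. (\<lambda>t v. 1::real) t (\<omega> t)) = (\<Prod>t\<in>{1..T}. \<Sum>v<n. p v * 1)"
    by (rule Ex_prod)
  then have "Ex n T p (\<lambda>\<omega>. 1) = 1" using assms by simp
  then show ?thesis using Ex_cmult[of n T p a "\<lambda>_. 1"] by simp
qed

definition Yf :: "(nat \<Rightarrow> real) \<Rightarrow> nat \<Rightarrow> nat \<Rightarrow> real" where
  "Yf p j v = (if v = j then 1 else 0) - p j"

lemma Ex_cov:
  assumes "(\<Sum>j<n. p j) = 1" "j < n" "s \<in> {1..T}" "t \<in> {1..T}"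
  shows "Ex n T p (\<lambda>\<omega>. Yf p j (\<omega> s) * Yf p j (\<omega> t))
     = (if s = t then (\<Sum>v<n. p v * (Yf p j v * Yf p j v)) else 0)"
proof (cases "s = t")
  case True
  let ?h = "\<lambda>u v. if u = s then Yf p j v * Yf p j v else 1"
  have e: "(\<lambda>\<omega>. Yf p j (\<omega> s) * Yf p j (\<omega> t)) = (\<lambda>\<omega>. \<Prod>u\<in>{1..T}. ?h u (\<omega> u))"
    using True assms(3) by (intro ext) (simp add: prod.delta)
  have "(\<Prod>u\<in>{1..T}. \<Sum>v<n. p v * ?h u v) = (\<Prod>u\<in>{1..T}. if u = s then (\<Sum>v<n. p v * (Yf p j v * Yf p j v)) else 1)"
    using assms(1) by (intro prod.cong) auto
  also have "\<dots> = (\<Sum>v<n. p v * (Yf p j v * Yf p j v))" using assms(3) by (simp add: prod.delta)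
  finally have "Ex n T p (\<lambda>\<omega>. \<Prod>u\<in>{1..T}. ?h u (\<omega> u)) = (\<Sum>v<n. p v * (Yf p j v * Yf p j v))"
    by (simp only: Ex_prod[of n T p ?h])
  then show ?thesis using True assms(3) by (simp only: e) simp
next
  case False
  let ?h = "\<lambda>u v. (if u = s then Yf p j v else 1) * (if u = t then Yf p j v else 1)"
  have e: "(\<lambda>\<omega>. Yf p j (\<omega> s) * Yf p j (\<omega> t)) = (\<lambda>\<omega>. \<Prod>u\<in>{1..T}. ?h u (\<omega> u))"
    using assms(3,4) by (intro ext) (simp add: prod.distrib prod.delta)
  have z: "(\<Sum>v<n. p v * ?h s v) = 0"
  proof -
    have "(\<Sum>v<n. p v * ?h s v) = (\<Sum>v<n. p v * (if v = j then 1 else 0)) - (\<Sum>v<n. p v) * p j"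
      using False by (simp add: Yf_def right_diff_distrib sum_subtractf sum_distrib_right)
    also have "\<dots> = 0" using assms(1,2) by (simp add: if_distrib cong: if_cong)
    finally show ?thesis .
  qed
  have "(\<Prod>u\<in>{1..T}. \<Sum>v<n. p v * ?h u v) = 0"
    using z assms(3) by (intro prod_zero bexI[of _ s]) auto
  then have "Ex n T p (\<lambda>\<omega>. \<Prod>u\<in>{1..T}. ?h u (\<omega> u)) = 0"
    by (simp only: Ex_prod[of n T p ?h])
  then show ?thesis using False by (simp only: e) simp
qed

lemma Ex_var:
  assumes "(\<Sum>j<n. p j) = 1" "j < n" "U \<subseteq> {1..T}"
  shows "Ex n T p (\<lambda>\<omega>. (\<Sum>s\<in>U. e s * Yf p j (\<omega> s))^2)
       = (\<Sum>v<n. p v * (Yf p j v * Yf p j v)) * (\<Sum>s\<in>U. e s * e s)"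
proof -
  have fU: "finite U" using assms(3) finite_subset by blast
  have "Ex n T p (\<lambda>\<omega>. (\<Sum>s\<in>U. e s * Yf p j (\<omega> s))^2)
     = Ex n T p (\<lambda>\<omega>. \<Sum>s\<in>U. \<Sum>t\<in>U. (e s * e t) * (Yf p j (\<omega> s) * Yf p j (\<omega> t)))"
    by (simp add: power2_eq_square sum_product mult_ac)
  also have "\<dots> = (\<Sum>s\<in>U. \<Sum>t\<in>U. (e s * e t) * Ex n T p (\<lambda>\<omega>. Yf p j (\<omega> s) * Yf p j (\<omega> t)))"
    using fU by (simp add: Ex_sum Ex_cmult)
  also have "\<dots> = (\<Sum>s\<in>U. \<Sum>t\<in>U. (e s * e t) * (if s = t then (\<Sum>v<n. p v * (Yf p j v * Yf p j v)) else 0))"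
    using assms by (intro sum.cong refl) (subst Ex_cov, auto)
  also have "\<dots> = (\<Sum>s\<in>U. (e s * e s) * (\<Sum>v<n. p v * (Yf p j v * Yf p j v)))"
    using fU by (simp add: if_distrib sum.delta cong: if_cong)
  finally show ?thesis by (simp add: sum_distrib_right mult_ac)
qed

lemma Ex_abs_bound:
  assumes "\<forall>j<n. 0 \<le> p j" "(\<Sum>j<n. p j) = 1" "j < n" "U \<subseteq> {1..T}"
    "\<forall>s\<in>U. e s * e s = 1" "card U \<le> N" "N > 0"
  shows "Ex n T p (\<lambda>\<omega>. \<bar>\<Sum>s\<in>U. e s * Yf p j (\<omega> s)\<bar>) \<le> sqrt (real N)"
proof -
  define a where "a = sqrt (real N)"
  have a: "a > 0" using assms(7) by (simp add: a_def)
  have pj: "0 \<le> p j" "p j \<le> 1"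
    using assms(1,3) apply simp
    using assms(1,2,3) member_le_sum[of j "{..<n}" p] by auto
  have Y1: "Yf p j v * Yf p j v \<le> 1" for v
  proof -
    have "\<bar>Yf p j v\<bar> \<le> 1" using pj by (auto simp: Yf_def)
    then have "\<bar>Yf p j v\<bar> * \<bar>Yf p j v\<bar> \<le> 1 * 1" by (intro mult_mono) auto
    then show ?thesis by (simp add: abs_mult[symmetric])
  qed
  have q: "(\<Sum>v<n. p v * (Yf p j v * Yf p j v)) \<le> 1"
  proof -
    have "(\<Sum>v<n. p v * (Yf p j v * Yf p j v)) \<le> (\<Sum>v<n. p v * 1)"
      using assms(1) Y1 by (intro sum_mono mult_left_mono) auto
    then show ?thesis using assms(2) by simp
  qed
  have q0: "0 \<le> (\<Sum>v<n. p v * (Yf p j v * Yf p j v))"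
    using assms(1) by (intro sum_nonneg mult_nonneg_nonneg[OF _ zero_le_square]) auto
  have "(\<Sum>s\<in>U. e s * e s) = real (card U)" using assms(5) by simp
  then have EX2: "Ex n T p (\<lambda>\<omega>. (\<Sum>s\<in>U. e s * Yf p j (\<omega> s))^2) \<le> real N"
    using Ex_var[OF assms(2,3,4), of e] q q0 assms(6)
    by (metis (no_types, lifting) mult_left_le_one_le of_nat_0_le_iff of_nat_le_iff order_trans)
  have pw: "\<bar>x\<bar> \<le> (1 / (2*a)) * x^2 + a/2" for x :: real
  proof -
    have "0 \<le> (\<bar>x\<bar> - a)^2" by simp
    then have "2*a*\<bar>x\<bar> \<le> x^2 + a^2" by (simp add: power2_eq_square algebra_simps)
    then show ?thesis using a by (simp add: field_simps power2_eq_square)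
  qed
  have "Ex n T p (\<lambda>\<omega>. \<bar>\<Sum>s\<in>U. e s * Yf p j (\<omega> s)\<bar>)
     \<le> Ex n T p (\<lambda>\<omega>. (1 / (2*a)) * (\<Sum>s\<in>U. e s * Yf p j (\<omega> s))^2 + a/2)"
    using assms(1) pw by (intro Ex_mono) auto
  also have "\<dots> = (1 / (2*a)) * Ex n T p (\<lambda>\<omega>. (\<Sum>s\<in>U. e s * Yf p j (\<omega> s))^2) + a/2"
    by (simp only: Ex_add Ex_cmult Ex_const[OF assms(2)])
  also have "\<dots> \<le> (1 / (2*a)) * real N + a/2"
    using EX2 a by (intro add_right_mono mult_left_mono) auto
  also have "\<dots> = a" using a assms(7) by (simp add: a_def field_simps)
  finally show ?thesis by (simp add: a_def)
qed

lemma card_epoch: "k \<ge> 1 \<Longrightarrow> card (epoch T K k) = T div K"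
  unfolding epoch_def by (cases k) (auto simp: algebra_simps)

lemma Lam_sum: "real (Lam T K \<omega> k j) = (\<Sum>t\<in>epoch T K k. if \<omega> t = j then 1 else 0)"
proof -
  have fin: "finite (epoch T K k)" by (simp add: epoch_def)
  show ?thesis unfolding Lam_def using sum.inter_filter[OF fin, of "\<lambda>_. 1::real" "\<lambda>t. \<omega> t = j"] by simp
qed

lemma Lam_Y: "k \<ge> 1 \<Longrightarrow> (\<Sum>t\<in>epoch T K k. Yf p j (\<omega> t)) = real (Lam T K \<omega> k j) - real (T div K) * p j"
  by (simp add: Yf_def sum_subtractf Lam_sum card_epoch)

lemma Lam_diff_bound:
  assumes "\<forall>j<n. 0 \<le> p j" "(\<Sum>j<n. p j) = 1" "j < n" "1 \<le> k" "Suc k \<le> K" "T = K * d" "d \<ge> 1"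
  shows "Ex n T p (\<lambda>\<omega>. \<bar>real (Lam T K \<omega> k j) - real (Lam T K \<omega> (Suc k) j)\<bar>) \<le> sqrt (real (2*d))"
proof -
  have K0: "K > 0" using assms by auto
  have dd: "T div K = d" using assms(6) K0 by simp
  define A where "A = epoch T K k"
  define B where "B = epoch T K (Suc k)"
  define e where "e s = (if s \<in> A then 1 else -1::real)" for s
  have AB: "A \<inter> B = {}" unfolding A_def B_def epoch_def dd
    using assms(4) by (cases k) (auto simp: algebra_simps)
  have ABsub: "A \<union> B \<subseteq> {1..T}" unfolding A_def B_def epoch_def dd
  proof -
    have "Suc k * d \<le> K * d" by (rule mult_le_mono1[OF assms(5)])
    then show "{(k - 1) * d + 1..k * d} \<union> {(Suc k - 1) * d + 1..Suc k * d} \<subseteq> {1..T}"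
      using assms(5,6) mult_le_mono1[of k K d] by auto
  qed
  have fin: "finite A" "finite B" by (auto simp: A_def B_def epoch_def)
  have cardU: "card (A \<union> B) = 2 * d"
    using card_Un_disjoint[OF fin AB] card_epoch[of k T K] card_epoch[of "Suc k" T K] assms(4) dd
    by (simp add: A_def B_def)
  have eq: "\<bar>real (Lam T K \<omega> k j) - real (Lam T K \<omega> (Suc k) j)\<bar> = \<bar>\<Sum>s\<in>A \<union> B. e s * Yf p j (\<omega> s)\<bar>" for \<omega>
  proof -
    have "(\<Sum>s\<in>A \<union> B. e s * Yf p j (\<omega> s)) = (\<Sum>s\<in>A. e s * Yf p j (\<omega> s)) + (\<Sum>s\<in>B. e s * Yf p j (\<omega> s))"
      by (rule sum.union_disjoint[OF fin AB])
    also have "(\<Sum>s\<in>A. e s * Yf p j (\<omega> s)) = (\<Sum>s\<in>A. Yf p j (\<omega> s))" by (simp add: e_def)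
    also have "(\<Sum>s\<in>B. e s * Yf p j (\<omega> s)) = - (\<Sum>s\<in>B. Yf p j (\<omega> s))"
    proof -
      have "(\<Sum>s\<in>B. e s * Yf p j (\<omega> s)) = (\<Sum>s\<in>B. - Yf p j (\<omega> s))"
        using AB by (intro sum.cong) (auto simp: e_def)
      then show ?thesis by (simp add: sum_negf)
    qed
    finally show ?thesis using assms(4)
      by (simp add: A_def B_def Lam_Y)
  qed
  have "Ex n T p (\<lambda>\<omega>. \<bar>\<Sum>s\<in>A \<union> B. e s * Yf p j (\<omega> s)\<bar>) \<le> sqrt (real (2*d))"
    using assms(7) by (intro Ex_abs_bound[OF assms(1,2,3) ABsub]) (auto simp: e_def cardU)
  then show ?thesis by (simp only: eq)
qed



definition trunc :: "(nat \<Rightarrow> nat) \<Rightarrow> nat \<Rightarrow> nat \<Rightarrow> nat" where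
  "trunc f B i = min (f i) (B - sum f {..<i})"

lemma trunc_sum: "(\<Sum>i<M. trunc f B i) = min (\<Sum>i<M. f i) B"
  by (induction M) (auto simp: trunc_def)

lemma trunc_le: "trunc f B i \<le> f i"
  by (simp add: trunc_def)

lemma finite_box3: "finite {Z::nat\<Rightarrow>nat\<Rightarrow>nat\<Rightarrow>nat. \<forall>a b c. Z a b c \<noteq> 0 \<longrightarrow> a \<le> K \<and> b < n \<and> c < m \<and> Z a b c \<le> B}"
proof -
  define Box where "Box = {..K} \<times> {..<n} \<times> {..<m}"
  define F where "F = {f::nat\<times>nat\<times>nat\<Rightarrow>nat. \<forall>x. (x \<in> Box \<longrightarrow> f x \<in> {..B}) \<and> (x \<notin> Box \<longrightarrow> f x = 0)}"
  have fF: "finite F" unfolding F_def Box_def by (intro finite_set_of_finite_funs) auto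
  have "{Z::nat\<Rightarrow>nat\<Rightarrow>nat\<Rightarrow>nat. \<forall>a b c. Z a b c \<noteq> 0 \<longrightarrow> a \<le> K \<and> b < n \<and> c < m \<and> Z a b c \<le> B}
        \<subseteq> (\<lambda>f a b c. f (a,b,c)) ` F"
  proof
    fix Z :: "nat\<Rightarrow>nat\<Rightarrow>nat\<Rightarrow>nat"
    assume Z: "Z \<in> {Z. \<forall>a b c. Z a b c \<noteq> 0 \<longrightarrow> a \<le> K \<and> b < n \<and> c < m \<and> Z a b c \<le> B}"
    define f where "f x = (case x of (a,b,c) \<Rightarrow> Z a b c)" for x
    have "f \<in> F" using Z unfolding F_def Box_def f_def by (auto split: prod.splits) (metis le0 gr0I)
    moreover have "Z = (\<lambda>a b c. f (a,b,c))" by (simp add: f_def)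
    ultimately show "Z \<in> (\<lambda>f a b c. f (a,b,c)) ` F" by blast
  qed
  then show ?thesis using fF finite_subset by blast
qed

lemma finite_offfeas: "finite (offfeas m n S K k lam)"
proof -
  have "offfeas m n S K k lam \<subseteq> {Z. \<forall>a b c. Z a b c \<noteq> 0 \<longrightarrow> a \<le> K \<and> b < n \<and> c < m \<and> Z a b c \<le> (\<Sum>j<n. lam j)}"
  proof (intro subsetI CollectI allI impI)
    fix Z a b c assume Z: "Z \<in> offfeas m n S K k lam" and nz: "Z a b c \<noteq> 0"
    then have h: "k \<le> a" "a \<le> K" "b < n" "c < m" unfolding offfeas_def by auto
    have "Z a b c \<le> (\<Sum>i<m. Z a b i)" using h by (intro member_le_sum) auto
    also have "\<dots> \<le> lam b" using Z h unfolding offfeas_def by auto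
    also have "\<dots> \<le> (\<Sum>j<n. lam j)" using h by (intro member_le_sum) auto
    finally show "a \<le> K \<and> b < n \<and> c < m \<and> Z a b c \<le> (\<Sum>j<n. lam j)" using h by auto
  qed
  then show ?thesis using finite_box3 finite_subset by blast
qed

lemma Voff_le:
  assumes "Z \<in> offfeas m n S K k (Lam T K \<omega> k)"
  shows "Voff m n c S g K T \<omega> k z \<le> offobj m n c g K T k z Z"
  unfolding Voff_def using assms finite_offfeas by (intro Min_le finite_imageI) auto

lemma c_le_cS: fixes c :: "nat \<Rightarrow> nat \<Rightarrow> real" shows "j < n \<Longrightarrow> i < m \<Longrightarrow> \<bar>c j i\<bar> \<le> (\<Sum>j<n. \<Sum>i<m. \<bar>c j i\<bar>)"
proof -
  assume h: "j < n" "i < m"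
  have "\<bar>c j i\<bar> \<le> (\<Sum>i<m. \<bar>c j i\<bar>)" using h by (intro member_le_sum[of i "{..<m}" "\<lambda>i. \<bar>c j i\<bar>"]) auto
  also have "\<dots> \<le> (\<Sum>j<n. \<Sum>i<m. \<bar>c j i\<bar>)" using h by (intro member_le_sum[of j "{..<n}" "\<lambda>j. \<Sum>i<m. \<bar>c j i\<bar>"] sum_nonneg) auto
  finally show ?thesis .
qed

lemma c_part:
  fixes P P' :: "nat \<Rightarrow> nat \<Rightarrow> nat \<Rightarrow> nat"
  assumes le: "\<forall>k' j i. P' k' j i \<le> P k' j i"
    and dl: "\<forall>k'\<in>{k1..K}. \<forall>j<n. real (\<Sum>i<m. P k' j i) - real (\<Sum>i<m. P' k' j i) \<le> \<delta> j"
    and d0: "\<forall>j<n. 0 \<le> \<delta> j" and k1: "k1 \<ge> 1"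
  shows "(\<Sum>j<n. \<Sum>i<m. c j i * real (\<Sum>k'=k1..K. P' k' j i))
       \<le> (\<Sum>j<n. \<Sum>i<m. c j i * real (\<Sum>k'=k1..K. P k' j i)) + (\<Sum>j<n. \<Sum>i<m. \<bar>c j i\<bar>) * real K * (\<Sum>j<n. \<delta> j)"
proof -
  define cS where "cS = (\<Sum>j<n. \<Sum>i<m. \<bar>c j i\<bar>)"
  have cS0: "0 \<le> cS" unfolding cS_def by (intro sum_nonneg) auto
  have "(\<Sum>j<n. \<Sum>i<m. c j i * real (\<Sum>k'=k1..K. P' k' j i)) - (\<Sum>j<n. \<Sum>i<m. c j i * real (\<Sum>k'=k1..K. P k' j i))
      = (\<Sum>j<n. \<Sum>i<m. \<Sum>k'=k1..K. c j i * (real (P' k' j i) - real (P k' j i)))"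
    by (simp add: sum_subtractf[symmetric] right_diff_distrib sum_distrib_left)
  also have "\<dots> \<le> (\<Sum>j<n. \<Sum>i<m. \<Sum>k'=k1..K. cS * (real (P k' j i) - real (P' k' j i)))"
  proof (intro sum_mono)
    fix j i k' assume h: "j \<in> {..<n}" "i \<in> {..<m}"
    have x: "real (P' k' j i) \<le> real (P k' j i)" using le by simp
    have "c j i * (real (P' k' j i) - real (P k' j i)) \<le> \<bar>c j i\<bar> * (real (P k' j i) - real (P' k' j i))"
      using x by (cases "c j i \<ge> 0") (auto simp: algebra_simps mult_left_mono mult_left_mono_neg)
    also have "\<dots> \<le> cS * (real (P k' j i) - real (P' k' j i))"
      using x c_le_cS[of j n i m c] h unfolding cS_def by (intro mult_right_mono) auto
    finally show "c j i * (real (P' k' j i) - real (P k' j i)) \<le> cS * (real (P k' j i) - real (P' k' j i))" .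
  qed
  also have "\<dots> = (\<Sum>j<n. \<Sum>k'=k1..K. \<Sum>i<m. cS * (real (P k' j i) - real (P' k' j i)))"
    by (rule sum.cong[OF refl], rule sum.swap)
  also have "\<dots> = (\<Sum>j<n. \<Sum>k'=k1..K. cS * (real (\<Sum>i<m. P k' j i) - real (\<Sum>i<m. P' k' j i)))"
    by (simp only: sum_distrib_left[symmetric] sum_subtractf of_nat_sum)
  also have "\<dots> \<le> (\<Sum>j<n. \<Sum>k'=k1..K. cS * \<delta> j)"
    using dl cS0 by (intro sum_mono mult_left_mono) auto
  also have "\<dots> = (\<Sum>j<n. cS * \<delta> j * real (card {k1..K}))" by (simp add: mult_ac)
  also have "\<dots> \<le> (\<Sum>j<n. cS * \<delta> j * real K)"
    using cS0 d0 k1 by (intro sum_mono mult_left_mono) auto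
  also have "\<dots> = cS * real K * (\<Sum>j<n. \<delta> j)" by (simp add: sum_distrib_left sum_distrib_right mult_ac)
  finally show ?thesis unfolding cS_def by simp
qed

lemma g_term:
  fixes g :: "real \<Rightarrow> real"
  assumes lip: "L-lipschitz_on {0..1} g" and AA: "A' \<le> A" and A0: "0 \<le> A'" and z0: "0 \<le> z"
    and den: "den = kk * tk" and kk: "kk > 0" and tk: "tk > 0" and a1: "(z + A) / den \<le> 1"
  shows "tk * (kk * g ((z + A') / den)) \<le> tk * (kk * g ((z + A) / den)) + \<bar>L\<bar> * (A - A')"
proof -
  have dp: "den > 0" using den kk tk by simp
  have A'0: "0 \<le> z + A'" using z0 A0 by linarith
  have b0: "0 \<le> (z + A') / den" using A'0 dp by simp
  have ba: "(z + A') / den \<le> (z + A) / den" using AA dp by (simp add: divide_right_mono)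
  have "dist (g ((z + A') / den)) (g ((z + A) / den)) \<le> L * dist ((z + A') / den) ((z + A) / den)"
    using lip b0 ba a1 by (intro lipschitz_onD) auto
  then have "g ((z + A') / den) - g ((z + A) / den) \<le> L * ((z + A) / den - (z + A') / den)"
    using ba by (simp add: dist_real_def)
  also have "(z + A) / den - (z + A') / den = (A - A') / den" by (simp add: diff_divide_distrib add_divide_distrib)
  finally have "tk * kk * (g ((z + A') / den) - g ((z + A) / den)) \<le> tk * kk * (L * ((A - A') / den))"
    using tk kk by (intro mult_left_mono) auto
  also have "tk * kk * (L * ((A - A') / den)) = L * (A - A')" using den kk tk by (simp add: field_simps)
  also have "\<dots> \<le> \<bar>L\<bar> * (A - A')" using AA by (intro mult_right_mono) auto
  finally show ?thesis by (simp add: algebra_simps)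
qed

lemma g_part:
  fixes P P' :: "nat \<Rightarrow> nat \<Rightarrow> nat \<Rightarrow> nat" and g :: "nat \<Rightarrow> nat \<Rightarrow> real \<Rightarrow> real"
  assumes le: "\<forall>k' j i. P' k' j i \<le> P k' j i"
    and dl: "\<forall>k'\<in>{k1..K}. \<forall>j<n. real (\<Sum>i<m. P k' j i) - real (\<Sum>i<m. P' k' j i) \<le> \<delta> j"
    and d0: "\<forall>j<n. 0 \<le> \<delta> j" and k1: "k1 \<ge> 1"
    and args: "\<forall>k'\<in>{k1..K}. \<forall>i<m. (z i + real (\<Sum>j<n. \<Sum>k''=k1..k'. P k'' j i)) / (real k' * real T / real K) \<le> 1"
    and z0: "\<forall>i<m. 0 \<le> z i"
    and lip: "\<forall>k'\<in>{k1..K}. \<forall>i<m. L-lipschitz_on {0..1} (g k' i)"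
    and TK: "real T / real K > 0"
  shows "real T / real K * (\<Sum>k'=k1..K. \<Sum>i<m. real k' * g k' i ((z i + real (\<Sum>j<n. \<Sum>k''=k1..k'. P' k'' j i)) / (real k' * real T / real K)))
       \<le> real T / real K * (\<Sum>k'=k1..K. \<Sum>i<m. real k' * g k' i ((z i + real (\<Sum>j<n. \<Sum>k''=k1..k'. P k'' j i)) / (real k' * real T / real K)))
         + \<bar>L\<bar> * real K * real K * (\<Sum>j<n. \<delta> j)"
proof -
  define tk where "tk = real T / real K"
  define X where "X k' i = real (\<Sum>j<n. \<Sum>k''=k1..k'. P k'' j i) - real (\<Sum>j<n. \<Sum>k''=k1..k'. P' k'' j i)" for k' i
  have step: "tk * (real k' * g k' i ((z i + real (\<Sum>j<n. \<Sum>k''=k1..k'. P' k'' j i)) / (real k' * real T / real K)))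
      \<le> tk * (real k' * g k' i ((z i + real (\<Sum>j<n. \<Sum>k''=k1..k'. P k'' j i)) / (real k' * real T / real K))) + \<bar>L\<bar> * X k' i"
    if h: "k' \<in> {k1..K}" "i \<in> {..<m}" for k' i
  proof -
    have "real (\<Sum>j<n. \<Sum>k''=k1..k'. P' k'' j i) \<le> real (\<Sum>j<n. \<Sum>k''=k1..k'. P k'' j i)"
      using le by (simp only: of_nat_le_iff) (intro sum_mono, auto)
    moreover have "0 \<le> real (\<Sum>j<n. \<Sum>k''=k1..k'. P' k'' j i)" by (rule of_nat_0_le_iff)
    ultimately show ?thesis unfolding X_def
      using h k1 TK lip args z0
      by (intro g_term[where kk = "real k'" and tk = tk]) (auto simp: tk_def)
  qed
  have "tk * (\<Sum>k'=k1..K. \<Sum>i<m. real k' * g k' i ((z i + real (\<Sum>j<n. \<Sum>k''=k1..k'. P' k'' j i)) / (real k' * real T / real K)))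
      = (\<Sum>k'=k1..K. \<Sum>i<m. tk * (real k' * g k' i ((z i + real (\<Sum>j<n. \<Sum>k''=k1..k'. P' k'' j i)) / (real k' * real T / real K))))"
    by (simp add: sum_distrib_left)
  also have "\<dots> \<le> (\<Sum>k'=k1..K. \<Sum>i<m. tk * (real k' * g k' i ((z i + real (\<Sum>j<n. \<Sum>k''=k1..k'. P k'' j i)) / (real k' * real T / real K))) + \<bar>L\<bar> * X k' i)"
    using step by (intro sum_mono) auto
  also have "\<dots> = tk * (\<Sum>k'=k1..K. \<Sum>i<m. real k' * g k' i ((z i + real (\<Sum>j<n. \<Sum>k''=k1..k'. P k'' j i)) / (real k' * real T / real K)))
       + \<bar>L\<bar> * (\<Sum>k'=k1..K. \<Sum>i<m. X k' i)"
    by (simp add: sum.distrib sum_distrib_left)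
  also have "(\<Sum>k'=k1..K. \<Sum>i<m. X k' i) \<le> real K * real K * (\<Sum>j<n. \<delta> j)"
  proof -
    have "(\<Sum>k'=k1..K. \<Sum>i<m. X k' i) = (\<Sum>k'=k1..K. \<Sum>i<m. \<Sum>j<n. \<Sum>k''=k1..k'. (real (P k'' j i) - real (P' k'' j i)))"
      unfolding X_def by (simp add: sum_subtractf)
    also have "\<dots> = (\<Sum>k'=k1..K. \<Sum>j<n. \<Sum>k''=k1..k'. \<Sum>i<m. (real (P k'' j i) - real (P' k'' j i)))"
    proof (rule sum.cong[OF refl])
      fix k'
      have "(\<Sum>i<m. \<Sum>j<n. \<Sum>k''=k1..k'. (real (P k'' j i) - real (P' k'' j i)))
          = (\<Sum>j<n. \<Sum>i<m. \<Sum>k''=k1..k'. (real (P k'' j i) - real (P' k'' j i)))" by (rule sum.swap)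
      also have "\<dots> = (\<Sum>j<n. \<Sum>k''=k1..k'. \<Sum>i<m. (real (P k'' j i) - real (P' k'' j i)))"
        by (rule sum.cong[OF refl], rule sum.swap)
      finally show "(\<Sum>i<m. \<Sum>j<n. \<Sum>k''=k1..k'. (real (P k'' j i) - real (P' k'' j i)))
          = (\<Sum>j<n. \<Sum>k''=k1..k'. \<Sum>i<m. (real (P k'' j i) - real (P' k'' j i)))" .
    qed
    also have "\<dots> \<le> (\<Sum>k'=k1..K. \<Sum>j<n. \<Sum>k''=k1..k'. \<delta> j)"
    proof (intro sum_mono)
      fix k' j k'' assume h: "k' \<in> {k1..K}" "j \<in> {..<n}" "k'' \<in> {k1..k'}"
      have "(\<Sum>i<m. (real (P k'' j i) - real (P' k'' j i))) = real (\<Sum>i<m. P k'' j i) - real (\<Sum>i<m. P' k'' j i)"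
        by (simp add: sum_subtractf)
      also have "\<dots> \<le> \<delta> j" using dl h by auto
      finally show "(\<Sum>i<m. (real (P k'' j i) - real (P' k'' j i))) \<le> \<delta> j" .
    qed
    also have "\<dots> \<le> (\<Sum>k'=k1..K. \<Sum>j<n. real K * \<delta> j)"
    proof (intro sum_mono)
      fix k' j assume h: "k' \<in> {k1..K}" "j \<in> {..<n}"
      have "(\<Sum>k''=k1..k'. \<delta> j) = real (card {k1..k'}) * \<delta> j" by simp
      also have "\<dots> \<le> real K * \<delta> j" using h d0 k1 by (intro mult_right_mono) auto
      finally show "(\<Sum>k''=k1..k'. \<delta> j) \<le> real K * \<delta> j" .
    qed
    also have "\<dots> = real (card {k1..K}) * (real K * (\<Sum>j<n. \<delta> j))" by (simp add: sum_distrib_left)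
    also have "\<dots> \<le> real K * (real K * (\<Sum>j<n. \<delta> j))"
      using d0 k1 by (intro mult_right_mono mult_nonneg_nonneg sum_nonneg) auto
    finally show ?thesis by simp
  qed
  then have "\<bar>L\<bar> * (\<Sum>k'=k1..K. \<Sum>i<m. X k' i) \<le> \<bar>L\<bar> * (real K * real K * (\<Sum>j<n. \<delta> j))"
    by (intro mult_left_mono) auto
  finally show ?thesis unfolding tk_def by (simp add: mult_ac)
qed

lemma offobj_diff:
  fixes P P' :: "nat \<Rightarrow> nat \<Rightarrow> nat \<Rightarrow> nat" and g :: "nat \<Rightarrow> nat \<Rightarrow> real \<Rightarrow> real"
  assumes le: "\<forall>k' j i. P' k' j i \<le> P k' j i"
    and dl: "\<forall>k'\<in>{k1..K}. \<forall>j<n. real (\<Sum>i<m. P k' j i) - real (\<Sum>i<m. P' k' j i) \<le> \<delta> j"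
    and d0: "\<forall>j<n. 0 \<le> \<delta> j" and k1: "k1 \<ge> 1"
    and args: "\<forall>k'\<in>{k1..K}. \<forall>i<m. (z i + real (\<Sum>j<n. \<Sum>k''=k1..k'. P k'' j i)) / (real k' * real T / real K) \<le> 1"
    and z0: "\<forall>i<m. 0 \<le> z i"
    and lip: "\<forall>k'\<in>{k1..K}. \<forall>i<m. L-lipschitz_on {0..1} (g k' i)"
    and TK: "real T / real K > 0"
  shows "offobj m n c g K T k1 z P' \<le> offobj m n c g K T k1 z P
           + ((\<Sum>j<n. \<Sum>i<m. \<bar>c j i\<bar>) * real K + \<bar>L\<bar> * real K * real K) * (\<Sum>j<n. \<delta> j)"
proof -
  note cp = c_part[OF le dl d0 k1, of c]
  note gp = g_part[OF le dl d0 k1 args z0 lip TK]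
  show ?thesis unfolding offobj_def using cp gp by (simp add: distrib_right)
qed



locale dgdctx =
  fixes m n :: nat and c :: "nat \<Rightarrow> nat \<Rightarrow> real" and S :: "nat \<Rightarrow> nat set"
    and g :: "nat \<Rightarrow> nat \<Rightarrow> real \<Rightarrow> real" and K T d :: nat and \<eta> :: real
    and \<mu>1 :: "nat \<Rightarrow> nat \<Rightarrow> real" and selX :: xsel and selA :: asel and \<omega> :: "nat \<Rightarrow> nat"
  assumes K1: "K \<ge> 1" and Td: "T = K * d" and d1: "d \<ge> 1"
    and w: "\<omega> \<in> PiE {1..T} (\<lambda>_. {..<n})"
    and valid: "dgd_valid m c S g K T \<eta> \<mu>1 selX selA \<omega>"
begin

lemma TdivK: "T div K = d" using K1 Td by simp

lemma epoch_eq: "epoch T K k = {(k - 1) * d + 1 .. k * d}"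
  unfolding epoch_def TdivK ..

lemma ep_epoch:
  assumes "k \<ge> 1" "t \<in> epoch T K k" shows "ep T K t = k"
proof -
  have t: "(k - 1) * d + 1 \<le> t" "t \<le> k * d" using assms(2) by (auto simp: epoch_eq)
  have "(t - 1) div d = k - 1"
  proof (rule div_nat_eqI)
    show "d * (k - 1) \<le> t - 1" using t by (simp add: mult.commute)
    have "k * d = d * Suc (k - 1)" using assms(1) by (cases k) auto
    then show "t - 1 < d * Suc (k - 1)" using t d1 by linarith
  qed
  then show ?thesis unfolding ep_def TdivK using assms(1) by simp
qed

lemma ep_range:
  assumes "t \<in> {1..T}" shows "1 \<le> ep T K t" "ep T K t \<le> K"
proof -
  show "1 \<le> ep T K t" by (simp add: ep_def)
  have "t - 1 < K * d" using assms Td by auto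
  then have "(t - 1) div d < K" using d1 by (simp add: div_less_iff_less_mult)
  then show "ep T K t \<le> K" unfolding ep_def TdivK by simp
qed

lemma X_in:
  assumes "t \<in> {1..T}" "ep T K t \<le> k'" "k' \<le> K"
  shows "selX t (hist \<omega> t) k' \<in> Xset m S (\<omega> t)"
  using valid assms unfolding dgd_valid_def Let_def by auto

lemma X_props:
  assumes "t \<in> {1..T}" "ep T K t \<le> k'" "k' \<le> K"
  shows "selX t (hist \<omega> t) k' i \<le> 1" "(\<Sum>i<m. selX t (hist \<omega> t) k' i) \<le> 1"
    "selX t (hist \<omega> t) k' i \<noteq> 0 \<Longrightarrow> i < m \<and> i \<in> S (\<omega> t)"
  using X_in[OF assms] unfolding Xset_def by (auto simp: not_le)

lemma epoch_sub: "1 \<le> k \<Longrightarrow> k \<le> K \<Longrightarrow> epoch T K k \<subseteq> {1..T}"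
proof -
  assume k: "1 \<le> k" "k \<le> K"
  have "k * d \<le> K * d" using k by simp
  then show ?thesis using k unfolding epoch_eq by (auto simp: Td)
qed

lemma omega_lt: "t \<in> {1..T} \<Longrightarrow> \<omega> t < n"
  using w by (auto simp: PiE_iff)

lemma Zt_kkk: "1 \<le> k \<Longrightarrow> Zt K T selX \<omega> k k k j i = (\<Sum>t\<in>epoch T K k. if \<omega> t = j then xI K T selX \<omega> t i else 0)"
  unfolding Zt_def xI_def by (intro sum.cong refl) (simp add: ep_epoch)

lemma Zji_step:
  assumes "1 \<le> k"
  shows "Zji K T selX \<omega> j i (k * d) = Zji K T selX \<omega> j i ((k - 1) * d) + Zt K T selX \<omega> k k k j i"
proof -
  have "{1..k * d} = {1..(k - 1) * d} \<union> epoch T K k"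
    using assms by (cases k) (auto simp: epoch_eq)
  moreover have "{1..(k - 1) * d} \<inter> epoch T K k = {}" by (auto simp: epoch_eq)
  ultimately show ?thesis unfolding Zji_def using assms
    by (simp add: sum.union_disjoint epoch_eq Zt_kkk)
qed

lemma Zji_total: "Zji K T selX \<omega> j i (k * d) = (\<Sum>k'=1..k. Zt K T selX \<omega> k' k' k' j i)"
proof (induction k)
  case 0 then show ?case by (simp add: Zji_def)
next
  case (Suc k)
  then show ?case using Zji_step[of "Suc k" j i] by simp
qed

lemma Zi_step:
  assumes "1 \<le> k"
  shows "Zi n K T selX \<omega> i (k * d) = Zi n K T selX \<omega> i ((k - 1) * d) + (\<Sum>j<n. Zt K T selX \<omega> k k k j i)"
  unfolding Zi_def using Zji_step[OF assms] by (simp add: sum.distrib)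

lemma sum_ind_le: "(\<Sum>j<n. if (v::nat) = j then (a::nat) else 0) \<le> a"
  by simp

lemma Zi_le: assumes "t \<le> T" shows "Zi n K T selX \<omega> i t \<le> t"
proof -
  have "Zi n K T selX \<omega> i t = (\<Sum>s\<in>{1..t}. \<Sum>j<n. if \<omega> s = j then xI K T selX \<omega> s i else 0)"
    unfolding Zi_def Zji_def by (rule sum.swap)
  also have "\<dots> \<le> (\<Sum>s\<in>{1..t}. 1)"
  proof (intro sum_mono)
    fix s assume s: "s \<in> {1..t}"
    then have s': "s \<in> {1..T}" using assms by auto
    have "xI K T selX \<omega> s i \<le> 1" unfolding xI_def using X_props(1)[OF s' _ ep_range(2)[OF s']] by simp
    then show "(\<Sum>j<n. if \<omega> s = j then xI K T selX \<omega> s i else 0) \<le> 1"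
      using sum_ind_le[of "\<omega> s" "xI K T selX \<omega> s i"] by linarith
  qed
  finally show ?thesis by simp
qed

definition Pl :: "nat \<Rightarrow> nat \<Rightarrow> nat \<Rightarrow> nat \<Rightarrow> nat" where
  "Pl k k' j i = (if Suc k \<le> k' \<and> k' \<le> K \<and> j < n \<and> i < m
      then (\<Sum>t\<in>epoch T K k. if \<omega> t = j then selX t (hist \<omega> t) k' i else 0) else 0)"

lemma Zt_split:
  assumes "k \<le> k'" "k' \<le> K" "j < n" "i < m"
  shows "Zt K T selX \<omega> k k k' j i = Zt K T selX \<omega> k k k j i + (\<Sum>k''=Suc k..k'. Pl k k'' j i)"
proof -
  let ?f = "\<lambda>t k''. if \<omega> t = j then selX t (hist \<omega> t) k'' i else 0"
  have "Zt K T selX \<omega> k k k' j i = (\<Sum>t\<in>epoch T K k. ?f t k + (\<Sum>k''=Suc k..k'. ?f t k''))"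
    unfolding Zt_def using assms(1) by (intro sum.cong refl) (rule sum.atLeast_Suc_atMost)
  also have "\<dots> = (\<Sum>t\<in>epoch T K k. ?f t k) + (\<Sum>k''=Suc k..k'. \<Sum>t\<in>epoch T K k. ?f t k'')"
    by (simp only: sum.distrib sum.swap[of _ "epoch T K k" "{Suc k..k'}"])
  also have "(\<Sum>t\<in>epoch T K k. ?f t k) = Zt K T selX \<omega> k k k j i" unfolding Zt_def by (intro sum.cong refl) simp
  also have "(\<Sum>k''=Suc k..k'. \<Sum>t\<in>epoch T K k. ?f t k'') = (\<Sum>k''=Suc k..k'. Pl k k'' j i)"
    using assms by (intro sum.cong refl) (auto simp: Pl_def)
  finally show ?thesis .
qed

lemma Lam_nat: "Lam T K \<omega> k j = (\<Sum>t\<in>epoch T K k. if \<omega> t = j then 1 else 0)"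
proof -
  have fin: "finite (epoch T K k)" by (simp add: epoch_def)
  show ?thesis unfolding Lam_def using sum.inter_filter[OF fin, of "\<lambda>_. 1::nat" "\<lambda>t. \<omega> t = j"] by simp
qed

lemma Pl_sum_i:
  assumes "1 \<le> k" "k \<le> K"
  shows "(\<Sum>i<m. Pl k k' j i) \<le> Lam T K \<omega> k j"
proof (cases "Suc k \<le> k' \<and> k' \<le> K \<and> j < n")
  case False then show ?thesis by (auto simp: Pl_def)
next
  case True
  have "(\<Sum>i<m. Pl k k' j i) = (\<Sum>i<m. \<Sum>t\<in>epoch T K k. if \<omega> t = j then selX t (hist \<omega> t) k' i else 0)"
    using True by (intro sum.cong refl) (simp add: Pl_def)
  also have "\<dots> = (\<Sum>t\<in>epoch T K k. \<Sum>i<m. if \<omega> t = j then selX t (hist \<omega> t) k' i else 0)"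
    by (rule sum.swap)
  also have "\<dots> \<le> (\<Sum>t\<in>epoch T K k. if \<omega> t = j then 1 else 0)"
  proof (intro sum_mono)
    fix t assume t: "t \<in> epoch T K k"
    have t': "t \<in> {1..T}" using t epoch_sub[OF assms(1,2)] by blast
    have "ep T K t \<le> k'" using ep_epoch[OF assms(1) t] True by simp
    then have "(\<Sum>i<m. selX t (hist \<omega> t) k' i) \<le> 1" using X_props(2)[OF t'] True by simp
    then show "(\<Sum>i<m. if \<omega> t = j then selX t (hist \<omega> t) k' i else 0) \<le> (if \<omega> t = j then 1 else 0)"
      by simp
  qed
  finally show ?thesis by (simp add: Lam_nat)
qed

lemma Pl_sum_j:
  assumes "1 \<le> k" "k \<le> K"
  shows "(\<Sum>j<n. Pl k k' j i) \<le> d"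
proof (cases "Suc k \<le> k' \<and> k' \<le> K \<and> i < m")
  case False then show ?thesis by (auto simp: Pl_def)
next
  case True
  have "(\<Sum>j<n. Pl k k' j i) = (\<Sum>j<n. \<Sum>t\<in>epoch T K k. if \<omega> t = j then selX t (hist \<omega> t) k' i else 0)"
    using True by (intro sum.cong refl) (simp add: Pl_def)
  also have "\<dots> = (\<Sum>t\<in>epoch T K k. \<Sum>j<n. if \<omega> t = j then selX t (hist \<omega> t) k' i else 0)"
    by (rule sum.swap)
  also have "\<dots> \<le> (\<Sum>t\<in>epoch T K k. 1)"
  proof (intro sum_mono)
    fix t assume t: "t \<in> epoch T K k"
    have t': "t \<in> {1..T}" using t epoch_sub[OF assms(1,2)] by blast
    have "ep T K t \<le> k'" using ep_epoch[OF assms(1) t] True by simp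
    then have "selX t (hist \<omega> t) k' i \<le> 1" using X_props(1)[OF t'] True by simp
    then show "(\<Sum>j<n. if \<omega> t = j then selX t (hist \<omega> t) k' i else 0) \<le> 1"
      using sum_ind_le[of "\<omega> t" "selX t (hist \<omega> t) k' i"] by linarith
  qed
  also have "\<dots> = d" using card_epoch[OF assms(1), of T K] TdivK by simp
  finally show ?thesis .
qed

lemma Pl_support:
  assumes "1 \<le> k" "k \<le> K" "Pl k k' j i \<noteq> 0"
  shows "Suc k \<le> k' \<and> k' \<le> K \<and> j < n \<and> i < m \<and> i \<in> S j"
proof -
  have g: "Suc k \<le> k' \<and> k' \<le> K \<and> j < n \<and> i < m" using assms(3) by (auto simp: Pl_def split: if_splits)
  then have nz: "(\<Sum>t\<in>epoch T K k. if \<omega> t = j then selX t (hist \<omega> t) k' i else 0) \<noteq> 0"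
    using assms(3) by (simp add: Pl_def)
  have "\<exists>t\<in>epoch T K k. (if \<omega> t = j then selX t (hist \<omega> t) k' i else 0) \<noteq> 0"
  proof (rule ccontr)
    assume "\<not> ?thesis"
    then have "(\<Sum>t\<in>epoch T K k. if \<omega> t = j then selX t (hist \<omega> t) k' i else 0) = 0"
      by (intro sum.neutral) blast
    with nz show False by simp
  qed
  then obtain t where t: "t \<in> epoch T K k" "(if \<omega> t = j then selX t (hist \<omega> t) k' i else 0) \<noteq> 0"
    by blast
  have t': "t \<in> {1..T}" using t epoch_sub[OF assms(1,2)] by blast
  have "ep T K t \<le> k'" using ep_epoch[OF assms(1) t(1)] g by simp
  then have "i \<in> S (\<omega> t)" using X_props(3)[OF t'] g t(2) by (auto split: if_splits)
  then show ?thesis using g t(2) by (auto split: if_splits)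
qed

end



context dgdctx begin

lemma Vprox_decomp:
  assumes k: "1 \<le> k" "k \<le> K"
  shows "Vprox m n c g K T selX \<omega> k (\<lambda>i. real (Zi n K T selX \<omega> i ((k - 1) * d))) =
     (\<Sum>j<n. \<Sum>i<m. c j i * real (Zt K T selX \<omega> k k k j i))
     + real T / real K * (\<Sum>i<m. real k * g k i (real (Zi n K T selX \<omega> i (k * d)) / (real k * real T / real K)))
     + offobj m n c g K T (Suc k) (\<lambda>i. real (Zi n K T selX \<omega> i (k * d))) (Pl k)"
proof -
  let ?Zt = "Zt K T selX \<omega>"
  let ?Zi = "Zi n K T selX \<omega>"
  have c: "(\<Sum>j<n. \<Sum>i<m. c j i * real (?Zt k k K j i))
      = (\<Sum>j<n. \<Sum>i<m. c j i * real (?Zt k k k j i)) + (\<Sum>j<n. \<Sum>i<m. c j i * real (\<Sum>k'=Suc k..K. Pl k k' j i))"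
  proof -
    have "(\<Sum>j<n. \<Sum>i<m. c j i * real (?Zt k k K j i))
        = (\<Sum>j<n. \<Sum>i<m. c j i * real (?Zt k k k j i) + c j i * real (\<Sum>k'=Suc k..K. Pl k k' j i))"
      using k by (intro sum.cong refl) (subst Zt_split[of k K], auto simp: distrib_left)
    then show ?thesis by (simp only: sum.distrib)
  qed
  have zk: "real (?Zi i ((k - 1) * d)) + real (\<Sum>j<n. ?Zt k k k j i) = real (?Zi i (k * d))" for i
    using Zi_step[OF k(1)] by simp
  have zk': "real (?Zi i ((k - 1) * d)) + real (\<Sum>j<n. ?Zt k k k' j i)
      = real (?Zi i (k * d)) + real (\<Sum>j<n. \<Sum>k''=Suc k..k'. Pl k k'' j i)"
    if h: "k' \<in> {Suc k..K}" "i \<in> {..<m}" for k' i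
  proof -
    have "(\<Sum>j<n. ?Zt k k k' j i) = (\<Sum>j<n. ?Zt k k k j i + (\<Sum>k''=Suc k..k'. Pl k k'' j i))"
      using h by (intro sum.cong refl) (rule Zt_split, auto)
    then have "(\<Sum>j<n. ?Zt k k k' j i) = (\<Sum>j<n. ?Zt k k k j i) + (\<Sum>j<n. \<Sum>k''=Suc k..k'. Pl k k'' j i)"
      by (simp only: sum.distrib)
    then show ?thesis using zk[of i] by simp
  qed
  have F1: "(\<Sum>i<m. real k * g k i ((real (?Zi i ((k - 1) * d)) + real (\<Sum>j<n. ?Zt k k k j i)) / (real k * real T / real K)))
      = (\<Sum>i<m. real k * g k i (real (?Zi i (k * d)) / (real k * real T / real K)))"
    by (simp only: zk)
  have F2: "(\<Sum>k'=Suc k..K. \<Sum>i<m. real k' * g k' i ((real (?Zi i ((k - 1) * d)) + real (\<Sum>j<n. ?Zt k k k' j i)) / (real k' * real T / real K)))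
      = (\<Sum>k'=Suc k..K. \<Sum>i<m. real k' * g k' i ((real (?Zi i (k * d)) + real (\<Sum>j<n. \<Sum>k''=Suc k..k'. Pl k k'' j i)) / (real k' * real T / real K)))"
    by (intro sum.cong refl) (simp only: zk')
  show ?thesis
    unfolding Vprox_def offobj_def c sum.atLeast_Suc_atMost[OF k(2)]
    by (simp only: F1 F2 distrib_left add_ac)
qed

lemma Vpi_decomp:
  "Vpi m n c g K T selX \<omega> = (\<Sum>k=1..K. (\<Sum>j<n. \<Sum>i<m. c j i * real (Zt K T selX \<omega> k k k j i))
     + real T / real K * (\<Sum>i<m. real k * g k i (real (Zi n K T selX \<omega> i (k * d)) / (real k * real T / real K))))"
proof -
  let ?Zt = "Zt K T selX \<omega>"
  have "(\<Sum>j<n. \<Sum>i<m. c j i * real (Zji K T selX \<omega> j i T)) = (\<Sum>j<n. \<Sum>i<m. \<Sum>k=1..K. c j i * real (?Zt k k k j i))"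
    by (simp add: Zji_total[of _ _ K, folded Td] sum_distrib_left)
  also have "\<dots> = (\<Sum>j<n. \<Sum>k=1..K. \<Sum>i<m. c j i * real (?Zt k k k j i))"
    by (rule sum.cong[OF refl], rule sum.swap)
  also have "\<dots> = (\<Sum>k=1..K. \<Sum>j<n. \<Sum>i<m. c j i * real (?Zt k k k j i))"
    by (rule sum.swap)
  finally have c: "(\<Sum>j<n. \<Sum>i<m. c j i * real (Zji K T selX \<omega> j i T)) = (\<Sum>k=1..K. \<Sum>j<n. \<Sum>i<m. c j i * real (?Zt k k k j i))" .
  show ?thesis unfolding Vpi_def c TdivK by (simp add: sum.distrib sum_distrib_left)
qed

lemma TK_eq: "real T / real K = real d" using Td K1 by simp

lemma min_aux: "(a::nat) \<le> l \<Longrightarrow> real a - real (min a b) \<le> \<bar>real l - real b\<bar>"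
  by (cases "a \<le> b") (auto simp: min_def)

lemma trunc_step:
  assumes k: "1 \<le> k" "Suc k \<le> K"
    and lip: "\<forall>k'\<in>{1..K}. \<forall>i<m. L-lipschitz_on {0..1} (g k' i)"
  shows "Voff m n c S g K T \<omega> (Suc k) (\<lambda>i. real (Zi n K T selX \<omega> i (k * d)))
     \<le> offobj m n c g K T (Suc k) (\<lambda>i. real (Zi n K T selX \<omega> i (k * d))) (Pl k)
       + ((\<Sum>j<n. \<Sum>i<m. \<bar>c j i\<bar>) * real K + \<bar>L\<bar> * real K * real K)
         * (\<Sum>j<n. \<bar>real (Lam T K \<omega> k j) - real (Lam T K \<omega> (Suc k) j)\<bar>)"
proof -
  have kK: "k \<le> K" using k by simp
  define P' where "P' k' j i = trunc (Pl k k' j) (Lam T K \<omega> (Suc k) j) i" for k' j i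
  define z where "z i = real (Zi n K T selX \<omega> i (k * d))" for i
  have le: "\<forall>k' j i. P' k' j i \<le> Pl k k' j i" by (simp add: P'_def trunc_le)
  have sumP': "(\<Sum>i<m. P' k' j i) = min (\<Sum>i<m. Pl k k' j i) (Lam T K \<omega> (Suc k) j)" for k' j
    unfolding P'_def by (rule trunc_sum)
  have supp: "Suc k \<le> k' \<and> k' \<le> K \<and> j < n \<and> i < m \<and> i \<in> S j" if "P' k' j i \<noteq> 0" for k' j i
  proof -
    have "Pl k k' j i \<noteq> 0" using le that by (metis le_0_eq)
    then show ?thesis by (rule Pl_support[OF k(1) kK])
  qed
  have sums: "(\<Sum>i<m. P' k' j i) \<le> Lam T K \<omega> (Suc k) j" for k' j by (simp add: sumP')
  have feas: "P' \<in> offfeas m n S K (Suc k) (Lam T K \<omega> (Suc k))"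
    unfolding offfeas_def using supp sums by blast
  have V: "Voff m n c S g K T \<omega> (Suc k) z \<le> offobj m n c g K T (Suc k) z P'"
    by (rule Voff_le[OF feas])
  have dl: "\<forall>k'\<in>{Suc k..K}. \<forall>j<n. real (\<Sum>i<m. Pl k k' j i) - real (\<Sum>i<m. P' k' j i)
      \<le> \<bar>real (Lam T K \<omega> k j) - real (Lam T K \<omega> (Suc k) j)\<bar>"
  proof (intro ballI allI impI)
    fix k' j
    have a: "(\<Sum>i<m. Pl k k' j i) \<le> Lam T K \<omega> k j" by (rule Pl_sum_i[OF k(1) kK])
    show "real (\<Sum>i<m. Pl k k' j i) - real (\<Sum>i<m. P' k' j i)
      \<le> \<bar>real (Lam T K \<omega> k j) - real (Lam T K \<omega> (Suc k) j)\<bar>"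
      unfolding sumP' by (rule min_aux[OF a])
  qed
  have args: "\<forall>k'\<in>{Suc k..K}. \<forall>i<m. (z i + real (\<Sum>j<n. \<Sum>k''=Suc k..k'. Pl k k'' j i)) / (real k' * real T / real K) \<le> 1"
  proof (intro ballI allI impI)
    fix k' i assume h: "k' \<in> {Suc k..K}" "i < m"
    have "k * d \<le> T" using kK Td by simp
    then have z1: "Zi n K T selX \<omega> i (k * d) \<le> k * d" by (rule Zi_le)
    have "(\<Sum>j<n. \<Sum>k''=Suc k..k'. Pl k k'' j i) = (\<Sum>k''=Suc k..k'. \<Sum>j<n. Pl k k'' j i)" by (rule sum.swap)
    also have "\<dots> \<le> (\<Sum>k''=Suc k..k'. d)" by (intro sum_mono Pl_sum_j[OF k(1) kK])
    also have "\<dots> = (k' - k) * d" by simp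
    finally have s: "(\<Sum>j<n. \<Sum>k''=Suc k..k'. Pl k k'' j i) \<le> (k' - k) * d" .
    have "Zi n K T selX \<omega> i (k * d) + (\<Sum>j<n. \<Sum>k''=Suc k..k'. Pl k k'' j i) \<le> k * d + (k' - k) * d"
      using z1 s by simp
    also have "\<dots> = k' * d" using h by (simp add: add_mult_distrib[symmetric])
    finally have "z i + real (\<Sum>j<n. \<Sum>k''=Suc k..k'. Pl k k'' j i) \<le> real k' * real d"
      unfolding z_def by (metis of_nat_add of_nat_le_iff of_nat_mult)
    moreover have "real k' * real d > 0" using h d1 by auto
    moreover have "real k' * real T / real K = real k' * real d" using TK_eq by (metis times_divide_eq_right)
    ultimately show "(z i + real (\<Sum>j<n. \<Sum>k''=Suc k..k'. Pl k k'' j i)) / (real k' * real T / real K) \<le> 1"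
      by simp
  qed
  have z0: "\<forall>i<m. 0 \<le> z i" by (simp add: z_def)
  have lip': "\<forall>k'\<in>{Suc k..K}. \<forall>i<m. L-lipschitz_on {0..1} (g k' i)" using lip by auto
  have TK: "real T / real K > 0" using TK_eq d1 by simp
  have d0: "\<forall>j<n. 0 \<le> \<bar>real (Lam T K \<omega> k j) - real (Lam T K \<omega> (Suc k) j)\<bar>" by simp
  have "offobj m n c g K T (Suc k) z P' \<le> offobj m n c g K T (Suc k) z (Pl k)
           + ((\<Sum>j<n. \<Sum>i<m. \<bar>c j i\<bar>) * real K + \<bar>L\<bar> * real K * real K)
             * (\<Sum>j<n. \<bar>real (Lam T K \<omega> k j) - real (Lam T K \<omega> (Suc k) j)\<bar>)"
    by (rule offobj_diff[OF le dl d0 _ args z0 lip' TK]) simp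
  with V show ?thesis unfolding z_def[abs_def] by simp
qed

lemma pointwise:
  assumes lip: "\<forall>k'\<in>{1..K}. \<forall>i<m. L-lipschitz_on {0..1} (g k' i)"
  shows "Vpi m n c g K T selX \<omega> \<le> Voff m n c S g K T \<omega> 1 (\<lambda>_. 0) + (\<Sum>k=1..K. Regt m n c S g K T selX \<omega> k)
     + ((\<Sum>j<n. \<Sum>i<m. \<bar>c j i\<bar>) * real K + \<bar>L\<bar> * real K * real K)
       * (\<Sum>k\<in>{1..<K}. \<Sum>j<n. \<bar>real (Lam T K \<omega> k j) - real (Lam T K \<omega> (Suc k) j)\<bar>)"
proof -
  define Lip where "Lip = (\<Sum>j<n. \<Sum>i<m. \<bar>c j i\<bar>) * real K + \<bar>L\<bar> * real K * real K"
  define \<delta> where "\<delta> k = (\<Sum>j<n. \<bar>real (Lam T K \<omega> k j) - real (Lam T K \<omega> (Suc k) j)\<bar>)" for k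
  define A where "A k = (\<Sum>j<n. \<Sum>i<m. c j i * real (Zt K T selX \<omega> k k k j i))
     + real T / real K * (\<Sum>i<m. real k * g k i (real (Zi n K T selX \<omega> i (k * d)) / (real k * real T / real K)))" for k
  define Ob where "Ob k = offobj m n c g K T (Suc k) (\<lambda>i. real (Zi n K T selX \<omega> i (k * d))) (Pl k)" for k
  define VO where "VO k = Voff m n c S g K T \<omega> k (\<lambda>i. real (Zi n K T selX \<omega> i ((k - 1) * d)))" for k
  have Reg: "Regt m n c S g K T selX \<omega> k = A k + Ob k - VO k" if "k \<in> {1..K}" for k
    using that Vprox_decomp[of k] unfolding Regt_def Let_def TdivK A_def Ob_def VO_def by simp
  have sumReg: "(\<Sum>k=1..K. Regt m n c S g K T selX \<omega> k) = (\<Sum>k=1..K. A k) + (\<Sum>k=1..K. Ob k) - (\<Sum>k=1..K. VO k)"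
  proof -
    have "(\<Sum>k=1..K. Regt m n c S g K T selX \<omega> k) = (\<Sum>k=1..K. A k + Ob k - VO k)"
      by (rule sum.cong[OF refl]) (rule Reg)
    then show ?thesis by (simp only: sum.distrib sum_subtractf)
  qed
  have Vpi: "Vpi m n c g K T selX \<omega> = (\<Sum>k=1..K. A k)" unfolding Vpi_decomp A_def ..
  have last: "(\<Sum>k=1..K. f k) = (\<Sum>k\<in>{1..<K}. f k) + f K" for f :: "nat \<Rightarrow> real"
  proof -
    have "{1..K} = {1..<Suc K}" by auto
    then show ?thesis using K1 by (simp add: sum.atLeastLessThan_Suc)
  qed
  have first: "(\<Sum>k=1..K. f k) = f 1 + (\<Sum>k\<in>{1..<K}. f (Suc k))" for f :: "nat \<Rightarrow> real"
    using K1
  proof (induction K rule: dec_induct)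
    case base then show ?case by simp
  next
    case (step K)
    then show ?case by (simp add: sum.atLeastLessThan_Suc)
  qed
  have ObK: "Ob K = 0" unfolding Ob_def offobj_def by simp
  have Zi0: "Zi n K T selX \<omega> i 0 = 0" for i using Zi_le[of 0 i] by simp
  have VO1: "VO 1 = Voff m n c S g K T \<omega> 1 (\<lambda>_. 0)" unfolding VO_def by (simp add: Zi0)
  have step: "VO (Suc k) \<le> Ob k + Lip * \<delta> k" if "k \<in> {1..<K}" for k
    using trunc_step[of k, OF _ _ lip] that unfolding VO_def Ob_def Lip_def \<delta>_def by simp
  have "(\<Sum>k\<in>{1..<K}. VO (Suc k)) \<le> (\<Sum>k\<in>{1..<K}. Ob k + Lip * \<delta> k)"
    by (rule sum_mono) (rule step)
  then have "(\<Sum>k=1..K. VO k) \<le> VO 1 + (\<Sum>k=1..K. Ob k) + Lip * (\<Sum>k\<in>{1..<K}. \<delta> k)"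
    unfolding first[of VO] last[of Ob] ObK by (simp add: sum.distrib sum_distrib_left)
  then show ?thesis
    unfolding Vpi Lip_def[symmetric] \<delta>_def[symmetric] using sumReg VO1 by simp
qed

end



lemma final_arith:
  fixes K d :: nat and Lip0 nn :: real
  assumes K: "K \<ge> 1" and d: "d \<ge> 1" and L0: "Lip0 \<ge> 0" and nn: "nn \<ge> 0"
  shows "(Lip0 * real K * real K) * (real (K - 1) * (nn * sqrt (real (2 * d))))
         \<le> 2 * nn * Lip0 * real K powr (5/2) * sqrt (real (K * d))"
proof -
  define s where "s = sqrt (real K)"
  have s0: "s > 0" using K by (simp add: s_def)
  have Ks: "real K = s * s" using K by (simp add: s_def)
  have pw: "real K powr (5/2) = s * s * s * s * s"
  proof -
    have "real K powr (5/2) = real K powr (2 + 1/2)" by simp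
    also have "\<dots> = real K powr 2 * real K powr (1/2)" by (rule powr_add)
    also have "\<dots> = real K ^ 2 * s" using K by (simp add: s_def powr_half_sqrt)
    finally show ?thesis using Ks by (simp add: power2_eq_square)
  qed
  have sT: "sqrt (real (K * d)) = s * sqrt (real d)" by (simp add: s_def real_sqrt_mult)
  have s2: "sqrt (real (2 * d)) = sqrt 2 * sqrt (real d)" by (simp add: real_sqrt_mult)
  have sq2: "sqrt 2 \<le> (2::real)"
  proof -
    have "sqrt 2 \<le> sqrt ((2::real)^2)" by (rule real_sqrt_le_mono) simp
    then show ?thesis by simp
  qed
  have Km: "real (K - 1) \<le> real K" by simp
  have "(Lip0 * real K * real K) * (real (K - 1) * (nn * sqrt (real (2 * d))))
     \<le> (Lip0 * real K * real K) * (real K * (nn * (2 * sqrt (real d))))"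
    unfolding s2 using L0 nn sq2 Km
    by (intro mult_left_mono mult_mono) (auto intro: mult_right_mono)
  also have "\<dots> = 2 * nn * Lip0 * real K powr (5/2) * sqrt (real (K * d))"
    unfolding pw sT unfolding Ks by (simp add: algebra_simps)
  finally show ?thesis .
qed

theorem lemma2:
  fixes m n :: nat and c :: "nat \<Rightarrow> nat \<Rightarrow> real" and S :: "nat \<Rightarrow> nat set"
    and L :: real and p :: "nat \<Rightarrow> real"
  assumes p_nonneg: "\<forall>j<n. 0 \<le> p j" and p_sum: "(\<Sum>j<n. p j) = 1"
  shows "\<exists>C::real. \<forall>K::nat. K \<ge> 1 \<longrightarrow> (\<exists>T0::nat. \<forall>T::nat. T \<ge> T0 \<longrightarrow> K dvd T \<longrightarrow>
    (\<forall>(g :: nat \<Rightarrow> nat \<Rightarrow> real \<Rightarrow> real) (\<rho> :: nat \<Rightarrow> nat \<Rightarrow> real) (\<eta>::real)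
       (\<mu>1 :: nat \<Rightarrow> nat \<Rightarrow> real) (selX :: xsel) (selA :: asel).
      (\<forall>k\<in>{1..K}. \<forall>i<m. \<rho> k i \<in> {0..1} \<and> convex_on {0..1} (g k i)
          \<and> L-lipschitz_on {0..1} (g k i) \<and> (\<forall>x\<in>{0..1}. 0 \<le> g k i x) \<and> g k i (\<rho> k i) = 0)
      \<longrightarrow> \<eta> > 0
      \<longrightarrow> (\<forall>\<omega>\<in>PiE {1..T} (\<lambda>_. {..<n}). dgd_valid m c S g K T \<eta> \<mu>1 selX selA \<omega>)
      \<longrightarrow> Ex n T p (Vpi m n c g K T selX)
          \<le> Ex n T p (\<lambda>\<omega>. Voff m n c S g K T \<omega> 1 (\<lambda>_. 0))
            + (\<Sum>k=1..K. Ex n T p (\<lambda>\<omega>. Regt m n c S g K T selX \<omega> k))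
            + C * real K powr (5/2) * sqrt (real T)))"
proof -
  define cS where "cS = (\<Sum>j<n. \<Sum>i<m. \<bar>c j i\<bar>)"
  have cS0: "cS \<ge> 0" unfolding cS_def by (intro sum_nonneg) auto
  define C where "C = 2 * real n * (cS + \<bar>L\<bar>)"
  show ?thesis
  proof (intro exI[of _ C] allI impI)
    fix K :: nat assume K1: "K \<ge> 1"
    show "\<exists>T0. \<forall>T. T \<ge> T0 \<longrightarrow> K dvd T \<longrightarrow>
      (\<forall>(g :: nat \<Rightarrow> nat \<Rightarrow> real \<Rightarrow> real) (\<rho> :: nat \<Rightarrow> nat \<Rightarrow> real) (\<eta>::real)
       (\<mu>1 :: nat \<Rightarrow> nat \<Rightarrow> real) (selX :: xsel) (selA :: asel).
      (\<forall>k\<in>{1..K}. \<forall>i<m. \<rho> k i \<in> {0..1} \<and> convex_on {0..1} (g k i)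
          \<and> L-lipschitz_on {0..1} (g k i) \<and> (\<forall>x\<in>{0..1}. 0 \<le> g k i x) \<and> g k i (\<rho> k i) = 0)
      \<longrightarrow> \<eta> > 0
      \<longrightarrow> (\<forall>\<omega>\<in>PiE {1..T} (\<lambda>_. {..<n}). dgd_valid m c S g K T \<eta> \<mu>1 selX selA \<omega>)
      \<longrightarrow> Ex n T p (Vpi m n c g K T selX)
          \<le> Ex n T p (\<lambda>\<omega>. Voff m n c S g K T \<omega> 1 (\<lambda>_. 0))
            + (\<Sum>k=1..K. Ex n T p (\<lambda>\<omega>. Regt m n c S g K T selX \<omega> k))
            + C * real K powr (5/2) * sqrt (real T))"
    proof (intro exI[of _ K] allI impI)
      fix T :: nat and g :: "nat \<Rightarrow> nat \<Rightarrow> real \<Rightarrow> real" and \<rho> :: "nat \<Rightarrow> nat \<Rightarrow> real" and \<eta> :: real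
        and \<mu>1 :: "nat \<Rightarrow> nat \<Rightarrow> real" and selX :: xsel and selA :: asel
      assume TK: "K \<le> T" and dv: "K dvd T"
        and hyp: "\<forall>k\<in>{1..K}. \<forall>i<m. \<rho> k i \<in> {0..1} \<and> convex_on {0..1} (g k i)
          \<and> L-lipschitz_on {0..1} (g k i) \<and> (\<forall>x\<in>{0..1}. 0 \<le> g k i x) \<and> g k i (\<rho> k i) = 0"
        and eta: "\<eta> > 0"
        and valid: "\<forall>\<omega>\<in>PiE {1..T} (\<lambda>_. {..<n}). dgd_valid m c S g K T \<eta> \<mu>1 selX selA \<omega>"
      obtain d where Td: "T = K * d" using dv by (auto elim: dvdE)
      have d1: "d \<ge> 1" using TK K1 Td by (cases d) auto
      have lip: "\<forall>k'\<in>{1..K}. \<forall>i<m. L-lipschitz_on {0..1} (g k' i)" using hyp by blast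
      define Lip where "Lip = cS * real K + \<bar>L\<bar> * real K * real K"
      define \<delta> where "\<delta> \<omega> k j = \<bar>real (Lam T K \<omega> k j) - real (Lam T K \<omega> (Suc k) j)\<bar>" for \<omega> k j
      have Lip0: "Lip \<ge> 0" unfolding Lip_def using cS0 by simp
      have pw: "Vpi m n c g K T selX \<omega> \<le> Voff m n c S g K T \<omega> 1 (\<lambda>_. 0) + (\<Sum>k=1..K. Regt m n c S g K T selX \<omega> k)
          + Lip * (\<Sum>k\<in>{1..<K}. \<Sum>j<n. \<delta> \<omega> k j)"
        if w: "\<omega> \<in> PiE {1..T} (\<lambda>_. {..<n})" for \<omega>
      proof -
        interpret dgdctx m n c S g K T d \<eta> \<mu>1 selX selA \<omega>
          using K1 Td d1 w valid by unfold_locales auto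
        show ?thesis using pointwise[OF lip] unfolding Lip_def cS_def \<delta>_def .
      qed
      have Eb: "Ex n T p (\<delta>' k j) \<le> sqrt (real (2*d))" if "k \<in> {1..<K}" "j < n" and "\<delta>' k j = (\<lambda>\<omega>. \<delta> \<omega> k j)" for k j \<delta>'
        using Lam_diff_bound[OF p_nonneg p_sum \<open>j < n\<close> _ _ Td d1, of k] that unfolding \<delta>_def by auto
      have "Ex n T p (Vpi m n c g K T selX)
          \<le> Ex n T p (\<lambda>\<omega>. Voff m n c S g K T \<omega> 1 (\<lambda>_. 0) + (\<Sum>k=1..K. Regt m n c S g K T selX \<omega> k)
               + Lip * (\<Sum>k\<in>{1..<K}. \<Sum>j<n. \<delta> \<omega> k j))"
        by (rule Ex_mono[OF p_nonneg pw])
      also have "\<dots> = Ex n T p (\<lambda>\<omega>. Voff m n c S g K T \<omega> 1 (\<lambda>_. 0))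
            + (\<Sum>k=1..K. Ex n T p (\<lambda>\<omega>. Regt m n c S g K T selX \<omega> k))
            + Lip * (\<Sum>k\<in>{1..<K}. \<Sum>j<n. Ex n T p (\<lambda>\<omega>. \<delta> \<omega> k j))"
        by (simp only: Ex_add Ex_cmult Ex_sum finite_atLeastAtMost finite_atLeastLessThan finite_lessThan)
      also have "(\<Sum>k\<in>{1..<K}. \<Sum>j<n. Ex n T p (\<lambda>\<omega>. \<delta> \<omega> k j)) \<le> (\<Sum>k\<in>{1..<K}. \<Sum>j<n. sqrt (real (2*d)))"
        by (intro sum_mono Eb[OF _ _ refl]) auto
      also have "(\<Sum>k\<in>{1..<K}. \<Sum>j<n. sqrt (real (2*d))) = real (K - 1) * (real n * sqrt (real (2*d)))"
        by simp
      finally have main: "Ex n T p (Vpi m n c g K T selX)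
          \<le> Ex n T p (\<lambda>\<omega>. Voff m n c S g K T \<omega> 1 (\<lambda>_. 0))
            + (\<Sum>k=1..K. Ex n T p (\<lambda>\<omega>. Regt m n c S g K T selX \<omega> k))
            + Lip * (real (K - 1) * (real n * sqrt (real (2*d))))"
        using Lip0 by (simp add: mult_left_mono)
      have "Lip \<le> (cS + \<bar>L\<bar>) * real K * real K"
        unfolding Lip_def using K1 cS0 by (simp add: algebra_simps mult_left_mono)
      then have "Lip * (real (K - 1) * (real n * sqrt (real (2*d))))
          \<le> ((cS + \<bar>L\<bar>) * real K * real K) * (real (K - 1) * (real n * sqrt (real (2*d))))"
        by (intro mult_right_mono) auto
      also have "\<dots> \<le> 2 * real n * (cS + \<bar>L\<bar>) * real K powr (5/2) * sqrt (real (K * d))"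
        using cS0 K1 d1 by (intro final_arith) auto
      finally have "Lip * (real (K - 1) * (real n * sqrt (real (2*d)))) \<le> C * real K powr (5/2) * sqrt (real T)"
        unfolding C_def Td .
      with main show "Ex n T p (Vpi m n c g K T selX)
          \<le> Ex n T p (\<lambda>\<omega>. Voff m n c S g K T \<omega> 1 (\<lambda>_. 0))
            + (\<Sum>k=1..K. Ex n T p (\<lambda>\<omega>. Regt m n c S g K T selX \<omega> k))
            + C * real K powr (5/2) * sqrt (real T)" by linarith
    qed
  qed
qed


end
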